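(* For integers $0\le l\le m$ let $$A_{l,m}:=l!\,m!\,2^{m+l}d_{l,m}=\frac{l!\,m!}{2^{m-l}}\sum_{k=l}^{m}2^{k}\binom{2m-2k}{m-k}\binom{m+k}{k}\binom{k}{l}.$$ Then $A_{l,m}$ is a positive integer and $$\nu_{2}(A_{l,m})=\nu_{2}\big((m+1-l)_{2l}\big)+l,$$ where $(x)_k=x(x+1)\cdots(x+k-1)$ for $k\ge1$ and $(x)_0=1$. In particular $\nu_2(A_{1,m})=\nu_2(m(m+1))+1$.
   Context: $d_{l,m}=2^{-2m}\sum_{k=l}^{m}2^{k}\binom{2m-2k}{m-k}\binom{m+k}{m}\binom{k}{l}$. For a nonzero rational $x$, $\nu_2(x)$ denotes its $2$-adic valuation (the exponent of $2$ in $x$). *)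

theory Defs
  imports "HOL-Computational_Algebra.Computational_Algebra"
begin

definition d_coef :: "nat \<Rightarrow> nat \<Rightarrow> rat" where
  "d_coef l m = (1 / 2 ^ (2*m)) *
     (\<Sum>k=l..m. 2 ^ k * of_nat ((2*m - 2*k) choose (m - k)) * of_nat ((m + k) choose m)
                  * of_nat (k choose l))"

definition A_coef :: "nat \<Rightarrow> nat \<Rightarrow> rat" where
  "A_coef l m = fact l * fact m * 2 ^ (m + l) * d_coef l m"

end

theory Submission
  imports Defs
begin

definition oddf :: "nat \<Rightarrow> nat" where "oddf j = (\<Prod>i<j. 2*i+1)"

lemma oddf_Suc: "oddf (Suc j) = oddf j * (2*j+1)"
  by (simp add: oddf_def)

lemma oddf_odd: "odd (oddf j)"
  by (induction j) (auto simp: oddf_Suc oddf_def[of 0])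

lemma fact_2j: "fact (2*j) = (2::nat)^j * fact j * oddf j"
proof (induction j)
  case 0 then show ?case by (simp add: oddf_def)
next
  case (Suc j)
  have "fact (2*Suc j) = (2*j+2)*((2*j+1) * (fact (2*j)::nat))"
    by (simp add: fact_Suc algebra_simps)
  also have "\<dots> = (2::nat)^Suc j * fact (Suc j) * oddf (Suc j)"
    using Suc by (simp add: oddf_Suc fact_Suc algebra_simps)
  finally show ?case .
qed

lemma cbin: "(2*j choose j) * fact j = (2::nat)^j * oddf j"
proof -
  have "fact j * fact (2*j - j) * (2*j choose j) = (fact (2*j)::nat)"
    by (rule binomial_fact_lemma) simp
  then have "fact j * ((2*j choose j) * fact j) = fact j * ((2::nat)^j * oddf j)"
    using fact_2j[of j] by (simp add: algebra_simps)
  then show ?thesis by simp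
qed

lemma G:
  assumes "l \<le> k"
  shows "fact l * fact m * ((m+k) choose m) * (k choose l) = (fact (m+l)::nat) * ((m+k) choose (k-l))"
proof -
  have e2: "fact m * fact (m+k-m) * ((m+k) choose m) = (fact (m+k)::nat)"
    by (rule binomial_fact_lemma) simp
  have e3: "fact l * fact (k-l) * (k choose l) = (fact k::nat)"
    by (rule binomial_fact_lemma) (use assms in simp)
  have e4: "fact (k-l) * fact (m+k-(k-l)) * ((m+k) choose (k-l)) = (fact (m+k)::nat)"
    by (rule binomial_fact_lemma) simp
  have mk: "m+k-(k-l) = m+l" using assms by simp
  have "(fact l * fact m * ((m+k) choose m) * (k choose l)) * (fact k * fact (k-l))
      = (fact m * fact k * ((m+k) choose m)) * (fact l * fact (k-l) * (k choose l))"
    by (simp add: algebra_simps)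
  also have "\<dots> = fact (m+k) * fact k" using e2 e3 by simp
  also have "\<dots> = ((fact (m+l)::nat) * ((m+k) choose (k-l))) * (fact k * fact (k-l))"
    using e4 mk by (simp add: algebra_simps)
  finally show ?thesis by simp
qed

lemma poch: "pochhammer (n+1) k * fact n = (fact (n+k)::nat)"
  by (induction k) (simp_all add: pochhammer_Suc fact_Suc algebra_simps)

lemma term_nat:
  assumes "l \<le> k" "k \<le> m"
  shows "fact l * fact m * 2^(m+l) * (2^k * ((2*m-2*k) choose (m-k)) * ((m+k) choose m) * (k choose l))
     = (2::nat)^(2*m) * (2^l * pochhammer (m+1-l) (2*l) *
          ((fact (m-l) div fact (m-k)) * oddf (m-k) * ((m+k) choose (k-l))))"
proof -
  obtain j where mj: "m = k + j" using assms by (metis le_add_diff_inverse)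
  define P where "P = (pochhammer (m+1-l) (2*l) :: nat)"
  define F where "F = (fact (m-l) div fact (m-k) :: nat)"
  have e5: "P * fact (m-l) = fact (m+l)"
    using poch[of "m-l" "2*l"] assms unfolding P_def by (simp add: Suc_diff_le add.commute)
  have e6: "F * fact j = fact (m-l)"
    unfolding F_def using mj assms by (simp add: fact_dvd)
  have bj: "2*m-2*k = 2*j" "m-k = j" using mj by auto
  have "(fact l * fact m * 2^(m+l) * (2^k * ((2*m-2*k) choose (m-k)) * ((m+k) choose m) * (k choose l))) * fact j
     = 2^(m+l+k) * (fact l * fact m * ((m+k) choose m) * (k choose l)) * ((2*j choose j) * fact j)"
    unfolding bj by (simp add: algebra_simps power_add)
  also have "\<dots> = 2^(m+l+k) * ((fact (m+l)::nat) * ((m+k) choose (k-l))) * (2^j * oddf j)"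
    using G[OF assms(1), of m] cbin[of j] by simp
  also have "\<dots> = 2^(2*m) * (2^l * P * (F * oddf j * ((m+k) choose (k-l)))) * fact j"
  proof -
    have pw: "(2::nat)^(m+l+k)*2^j = 2^(2*m)*2^l"
      unfolding power_add[symmetric] using mj by (simp add: algebra_simps)
    have pf: "P*(F*fact j) = fact(m+l)" using e5 e6 by simp
    have "2^(m+l+k) * ((fact (m+l)::nat) * ((m+k) choose (k-l))) * (2^j * oddf j)
        = (2^(m+l+k)*2^j) * fact (m+l) * oddf j * ((m+k) choose (k-l))"
      by (simp add: algebra_simps)
    also have "\<dots> = 2^(2*m)*2^l * (P*(F*fact j)) * oddf j * ((m+k) choose (k-l))"
      by (simp only: pw pf)
    finally show ?thesis by (simp add: algebra_simps)
  qed
  finally show ?thesis unfolding P_def F_def bj by simp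
qed

definition T :: "nat \<Rightarrow> nat \<Rightarrow> nat \<Rightarrow> nat" where
  "T l m k = (fact (m-l) div fact (m-k)) * oddf (m-k) * ((m+k) choose (k-l))"

lemma T_even:
  assumes "l < k" "k \<le> m"
  shows "even (T l m k)"
proof (cases "k = Suc l")
  case True
  have ml: "m - l = Suc (m - k)" using True assms by simp
  have F: "fact (m-l) div fact (m-k) = m - l"
    unfolding ml by (simp del: fact_Suc add: fact_Suc[of "m-k"])
  have "even ((m-l)*(m+k))" using True assms by auto
  moreover have "T l m k = (m-l) * oddf (m-k) * ((m+k) choose 1)" unfolding T_def F using True by simp
  ultimately show ?thesis by (auto simp: binomial_1)
next
  case False
  then have k2: "Suc (Suc l) \<le> k" using assms by simp
  obtain r where r: "m - l = Suc (Suc r)" using k2 assms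
    by (metis Suc_diff_Suc Suc_le_lessD le_less_trans less_le_trans not0_implies_Suc diff_is_0_eq' not_less_eq_eq)
  have "fact (m-l) = (m-l)*((m-l-1) * (fact r::nat))"
    unfolding r by (simp del: fact_Suc add: fact_Suc[of "Suc r"] fact_Suc[of r])
  moreover have "fact (m-k) dvd (fact r::nat)" using k2 assms r by (intro fact_dvd) simp
  ultimately have F: "fact (m-l) div fact (m-k) = (m-l)*(m-l-1) * (fact r div fact (m-k))"
    by (simp add: div_mult_swap mult.assoc)
  have "even ((m-l)*(m-l-1))" unfolding r by simp
  then show ?thesis unfolding T_def F by simp
qed

lemma B_odd:
  assumes "l \<le> m"
  shows "odd (\<Sum>k=l..m. T l m k)"
proof -
  have "(\<Sum>k=l..m. T l m k) = T l m l + (\<Sum>k=Suc l..m. T l m k)"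
    using assms by (rule sum.atLeast_Suc_atMost)
  moreover have "odd (T l m l)" by (simp add: T_def oddf_odd)
  moreover have "even (\<Sum>k=Suc l..m. T l m k)" by (rule dvd_sum) (auto intro: T_even)
  ultimately show ?thesis by simp
qed

lemma A_eq:
  assumes "l \<le> m"
  shows "A_coef l m = of_nat (2^l * pochhammer (m+1-l) (2*l) * (\<Sum>k=l..m. T l m k))"
proof -
  let ?t = "\<lambda>k. 2 ^ k * ((2*m - 2*k) choose (m - k)) * ((m + k) choose m) * (k choose l)"
  have "(2::rat)^(2*m) * A_coef l m = of_nat (\<Sum>k=l..m. fact l * fact m * 2^(m+l) * ?t k)"
    unfolding A_coef_def d_coef_def by (simp add: sum_distrib_left algebra_simps)
  also have "(\<Sum>k=l..m. fact l * fact m * 2^(m+l) * ?t k)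
     = (\<Sum>k=l..m. 2^(2*m) * (2^l * pochhammer (m+1-l) (2*l) * T l m k))"
    by (rule sum.cong) (auto simp: T_def term_nat)
  also have "\<dots> = 2^(2*m) * (2^l * pochhammer (m+1-l) (2*l) * (\<Sum>k=l..m. T l m k))"
    by (simp add: sum_distrib_left)
  finally show ?thesis by simp
qed

lemma part1:
  assumes "l \<le> m"
  shows "\<exists>n :: nat. n > 0 \<and> A_coef l m = of_nat n \<and>
         multiplicity (2::nat) n = multiplicity (2::nat) (pochhammer (m + 1 - l) (2 * l) :: nat) + l"
proof -
  define P where "P = (pochhammer (m + 1 - l) (2 * l) :: nat)"
  define B where "B = (\<Sum>k=l..m. T l m k)"
  have Bo: "odd B" unfolding B_def using assms by (rule B_odd)
  then have B0: "B \<noteq> 0" by (metis dvd_0_right)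
  have pp: "pochhammer (m-l+1) (2*l) * fact (m-l) \<noteq> (0::nat)" by (simp only: poch) simp
  have "m + 1 - l = m - l + 1" using assms by simp
  then have P0: "P \<noteq> 0" unfolding P_def using pp by auto
  have pr: "prime_elem (2::nat)" by simp
  have "multiplicity 2 (2^l * P * B) = multiplicity 2 ((2::nat)^l) + multiplicity 2 P + multiplicity 2 B"
    using P0 B0 by (simp add: prime_elem_multiplicity_mult_distrib[OF pr])
  also have "\<dots> = l + multiplicity 2 P"
    using Bo by (simp add: multiplicity_prime_power not_dvd_imp_multiplicity_0)
  finally show ?thesis
    using A_eq[OF assms] P0 B0 unfolding P_def[symmetric] B_def[symmetric]
    by (intro exI[of _ "2^l * P * B"]) simp
qed

theorem mainTheorem9:
  "(\<forall>l m :: nat. l \<le> m \<longrightarrow>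
      (\<exists>n :: nat. n > 0 \<and> A_coef l m = of_nat n \<and>
         multiplicity (2::nat) n = multiplicity (2::nat) (pochhammer (m + 1 - l) (2 * l) :: nat) + l))
   \<and> (\<forall>m :: nat. 1 \<le> m \<longrightarrow>
      (\<exists>n :: nat. n > 0 \<and> A_coef 1 m = of_nat n \<and>
         multiplicity (2::nat) n = multiplicity (2::nat) (m * (m + 1)) + 1))"
proof (intro conjI allI impI)
  fix l m :: nat assume "l \<le> m" then show "\<exists>n :: nat. n > 0 \<and> A_coef l m = of_nat n \<and>
         multiplicity (2::nat) n = multiplicity (2::nat) (pochhammer (m + 1 - l) (2 * l) :: nat) + l"
    by (rule part1)
next
  fix m :: nat assume "1 \<le> m"
  moreover have "(pochhammer (m + 1 - 1) (2 * 1) :: nat) = m * (m+1)"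
    by (simp add: numeral_2_eq_2 pochhammer_Suc)
  ultimately show "\<exists>n :: nat. n > 0 \<and> A_coef 1 m = of_nat n \<and>
         multiplicity (2::nat) n = multiplicity (2::nat) (m * (m + 1)) + 1"
    using part1[of 1 m] by simp
qed

end
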